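(* Under the standing setup and with $u$, $z^*$, $r_u$, $\delta_v$, $z_v$ as in the context, assume in addition that $\beta(u)\ne0$ and let $v\in B(u,r_u)\cap\widetilde X$ satisfy $\|u-v\|\le\frac{\varepsilon\|\beta(u)\|}{480}$. Then \[\|z_v\|\le\Big(1+4\delta_v\frac{\|u-u_{NN}\|}{\|\beta(u)\|}\Big)\|\beta(v)\|.\]
   Context: Norms are Euclidean; $B(x,r)$ is the open ball. Standing setup: $X\subseteq\mathbb{R}^d$ has reach $\tau_X>0$, where $\tau_X=\sup\{t\ge0:\text{every }x\text{ with }d(x,X)<t\text{ has a unique closest point in }\overline X\}$; $\widetilde X=X+B(0,\tau_X/2)$; for $u\in\widetilde X$, $u_{NN}$ is the unique closest point to $u$ in $\overline X$, and it is a known fact that $\|u_{NN}-v_{NN}\|\le2\|u-v\|$ for all $u,v\in\widetilde X$. $\varepsilon\in(0,1)$. $S_X=\overline{\{(x-y)/\|x-y\|:x\ne y\in X\}}$. A linear $\Pi$ provides $\eta$-convex hull distortion for $T\subseteq S^{d-1}$ if $|\,\|\Pi x\|-\|x\|\,|<\eta$ for all $x\in\operatorname{conv}(T)$. $\mathcal C=\{w_1,\ldots,w_\ell\}\subseteq S_X$ is finite with every $v\in S_X$ within distance $<\varepsilon/40$ of some $w_i$; $\Pi\in\mathbb{R}^{m\times d}$ provides $\frac{\varepsilon}{240}$-convex hull distortion for $S_X$. For $z\in\mathbb{R}^m$, $u\in\widetilde X$, $i=1,\ldots,\ell$: $\tilde g_i(z,u)=\langle z,\Pi w_i\rangle-\langle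 u-u_{NN},w_i\rangle-\frac{\varepsilon}{30}\|u-u_{NN}\|$, $\tilde g_{\ell+i}(z,u)=\langle u-u_{NN},w_i\rangle-\langle z,\Pi w_i\rangle-\frac{\varepsilon}{30}\|u-u_{NN}\|$; $\widetilde F_u=\{z:\tilde g_i(z,u)\le0\ \forall i\}$; $\beta(u)=\arg\min_{z\in\widetilde F_u}\|z\|$. Fix $u\in\widetilde X\setminus\overline X$ and $z^*\in\mathbb{R}^m$ with $\|z^*\|\le\|u-u_{NN}\|$ and $\tilde g_i(z^*,u)\le-\frac{\varepsilon}{60}\|u-u_{NN}\|$ for all $i$. Set $r_u=\min\{1,\frac{\varepsilon\|u-u_{NN}\|}{480}\}$, and for $v\in B(u,r_u)\cap\widetilde X$, $\delta_v=\frac{240\|u-v\|}{\varepsilon\|u-u_{NN}\|}$, $z_v=(1-\delta_v)\beta(u)+\delta_vz^*$. *)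

theory Defs
  imports "HOL-Analysis.Analysis"
begin

text \<open>Reach of a set (in the extended reals, so that infinite reach is allowed):
  sup of all t \<ge> 0 such that every x with d(x,X) < t has a unique closest point in closure X.\<close>
definition reach :: "'a::euclidean_space set \<Rightarrow> ereal" where
  "reach X = Sup {ereal t | t. t \<ge> 0 \<and>
      (\<forall>x. infdist x X < t \<longrightarrow> (\<exists>!y. y \<in> closure X \<and> dist x y = infdist x X))}"

definition Xtilde :: "'a::euclidean_space set \<Rightarrow> 'a set" where
  "Xtilde X = {x + y | x y. x \<in> X \<and> ereal (norm y) < reach X / 2}"

definition nn :: "'a::euclidean_space set \<Rightarrow> 'a \<Rightarrow> 'a" where
  "nn X u = (THE y. y \<in> closure X \<and> dist u y = infdist u X)"

definition secants :: "'a::euclidean_space set \<Rightarrow> 'a set" where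
  "secants X = closure {(1 / norm (x - y)) *\<^sub>R (x - y) | x y. x \<in> X \<and> y \<in> X \<and> x \<noteq> y}"

definition convex_hull_distortion ::
    "('a::euclidean_space \<Rightarrow> 'b::euclidean_space) \<Rightarrow> real \<Rightarrow> 'a set \<Rightarrow> bool" where
  "convex_hull_distortion Pm \<eta> T \<longleftrightarrow> (\<forall>x \<in> convex hull T. \<bar>norm (Pm x) - norm x\<bar> < \<eta>)"

definition gt ::
    "('a::euclidean_space \<Rightarrow> 'b::euclidean_space) \<Rightarrow> (nat \<Rightarrow> 'a) \<Rightarrow> nat \<Rightarrow> real \<Rightarrow> 'a set
     \<Rightarrow> nat \<Rightarrow> 'b \<Rightarrow> 'a \<Rightarrow> real" where
  "gt Pm w l \<epsilon> X i z u =
     (if i \<le> l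
      then inner z (Pm (w i)) - inner (u - nn X u) (w i) - \<epsilon> / 30 * norm (u - nn X u)
      else inner (u - nn X u) (w (i - l)) - inner z (Pm (w (i - l))) - \<epsilon> / 30 * norm (u - nn X u))"

definition Ft ::
    "('a::euclidean_space \<Rightarrow> 'b::euclidean_space) \<Rightarrow> (nat \<Rightarrow> 'a) \<Rightarrow> nat \<Rightarrow> real \<Rightarrow> 'a set
     \<Rightarrow> 'a \<Rightarrow> 'b set" where
  "Ft Pm w l \<epsilon> X u = {z. \<forall>i \<in> {1..2*l}. gt Pm w l \<epsilon> X i z u \<le> 0}"

definition beta ::
    "('a::euclidean_space \<Rightarrow> 'b::euclidean_space) \<Rightarrow> (nat \<Rightarrow> 'a) \<Rightarrow> nat \<Rightarrow> real \<Rightarrow> 'a set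
     \<Rightarrow> 'a \<Rightarrow> 'b" where
  "beta Pm w l \<epsilon> X u = (ARG_MIN norm z. z \<in> Ft Pm w l \<epsilon> X u)"

end

theory Submission
  imports Defs
begin

definition PR :: "'a::euclidean_space set \<Rightarrow> real \<Rightarrow> bool" where
  "PR X R \<longleftrightarrow> (\<forall>x. infdist x X < R \<longrightarrow> (\<exists>!y. y \<in> closure X \<and> dist x y = infdist x X))"

lemma nn_props:
  assumes "PR X R" "infdist x X < R"
  shows "nn X x \<in> closure X \<and> dist x (nn X x) = infdist x X"
proof -
  have "\<exists>!y. y \<in> closure X \<and> dist x y = infdist x X" using assms unfolding PR_def by blast
  then show ?thesis unfolding nn_def by (rule theI')
qed

lemma nn_unique:
  assumes "PR X R" "infdist x X < R" "y \<in> closure X" "dist x y = infdist x X"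
  shows "nn X x = y"
proof -
  have "\<exists>!y. y \<in> closure X \<and> dist x y = infdist x X" using assms unfolding PR_def by blast
  then show ?thesis unfolding nn_def using assms(3,4) by (intro the1_equality) auto
qed

lemma infdist_le_closure:
  assumes "y \<in> closure A" shows "infdist x A \<le> dist x y"
proof -
  have "A \<noteq> {}" using assms by auto
  then have "infdist y A = 0" using assms in_closure_iff_infdist_zero by blast
  then show ?thesis using infdist_triangle[of x A y] by simp
qed

lemma infdist_geI:
  assumes "A \<noteq> {}" "\<And>a. a \<in> closure A \<Longrightarrow> c \<le> dist x a"
  shows "c \<le> infdist x A"
  unfolding infdist_def using assms closure_subset by (auto intro!: cINF_greatest)

lemma nn_cont:
  fixes X :: "'a::euclidean_space set"
  assumes P: "PR X R" and B: "\<And>z. z \<in> cball y \<rho> \<Longrightarrow> infdist z X < R"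
  shows "continuous_on (cball y \<rho>) (nn X)"
proof -
  define T where "T = cball y (2*\<rho> + infdist y X) \<inter> closure X"
  have cT: "compact T" unfolding T_def by (simp add: compact_Int_closed)
  have fim: "nn X \<in> cball y \<rho> \<rightarrow> T"
  proof
    fix z assume z: "z \<in> cball y \<rho>"
    note nz = nn_props[OF P B[OF z]]
    have "dist y (nn X z) \<le> dist y z + dist z (nn X z)" by (rule dist_triangle)
    also have "\<dots> \<le> \<rho> + (infdist y X + dist z y)" using z nz infdist_triangle[of z X y] by simp
    also have "\<dots> \<le> 2*\<rho> + infdist y X" using z by (simp add: dist_commute)
    finally show "nn X z \<in> T" unfolding T_def using nz by simp
  qed
  have eq: "(\<lambda>x. (x, nn X x)) ` cball y \<rho> = (cball y \<rho> \<times> T) \<inter> {p. snd p \<in> closure X \<and> dist (fst p) (snd p) = infdist (fst p) X}"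
  proof
    show "(\<lambda>x. (x, nn X x)) ` cball y \<rho> \<subseteq> (cball y \<rho> \<times> T) \<inter> {p. snd p \<in> closure X \<and> dist (fst p) (snd p) = infdist (fst p) X}"
      using fim nn_props[OF P B] by auto
  next
    show "(cball y \<rho> \<times> T) \<inter> {p. snd p \<in> closure X \<and> dist (fst p) (snd p) = infdist (fst p) X} \<subseteq> (\<lambda>x. (x, nn X x)) ` cball y \<rho>"
    proof (rule subsetI)
      fix p assume "p \<in> (cball y \<rho> \<times> T) \<inter> {p. snd p \<in> closure X \<and> dist (fst p) (snd p) = infdist (fst p) X}"
      then obtain a b where pab: "p = (a,b)" and ab: "a \<in> cball y \<rho>" "b \<in> T" "b \<in> closure X" "dist a b = infdist a X"
        by (cases p) auto
      have "nn X a = b" using nn_unique[OF P B[OF ab(1)] ab(3) ab(4)] by blast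
      then show "p \<in> (\<lambda>x. (x, nn X x)) ` cball y \<rho>" using ab pab by force
    qed
  qed
  have cl: "closed {p::'a\<times>'a. snd p \<in> closure X \<and> dist (fst p) (snd p) = infdist (fst p) X}"
  proof -
    have "{p::'a\<times>'a. snd p \<in> closure X \<and> dist (fst p) (snd p) = infdist (fst p) X}
        = snd -` closure X \<inter> {p. dist (fst p) (snd p) = infdist (fst p) X}" by auto
    moreover have "closed (snd -` closure X :: ('a\<times>'a) set)"
      by (intro closed_vimage continuous_intros) simp
    moreover have "closed {p::'a\<times>'a. dist (fst p) (snd p) = infdist (fst p) X}"
      by (intro closed_Collect_eq continuous_intros continuous_on_infdist)
    ultimately show ?thesis by auto
  qed
  have "closedin (top_of_set (cball y \<rho> \<times> T)) ((\<lambda>x. (x, nn X x)) ` cball y \<rho>)"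
    unfolding eq by (intro closedin_closed_Int cl)
  then show ?thesis using continuous_closed_graph_eq[OF cT fim] by blast
qed

lemma extend_local:
  fixes X :: "'a::euclidean_space set"
  assumes P: "PR X R" and d0: "0 < infdist y X" and dR: "infdist y X < R"
  shows "\<exists>\<kappa>>1. \<forall>q'\<in>closure X. \<kappa> * infdist y X \<le> dist (nn X y + \<kappa> *\<^sub>R (y - nn X y)) q'"
proof -
  define d where "d = infdist y X"
  define \<rho> where "\<rho> = (R - d) / 2"
  have \<rho>0: "\<rho> > 0" using dR unfolding \<rho>_def d_def by simp
  have B: "infdist z X < R" if "z \<in> cball y \<rho>" for z
  proof -
    have "infdist z X \<le> infdist y X + dist z y" by (rule infdist_triangle)
    also have "\<dots> \<le> d + \<rho>" using that by (simp add: d_def dist_commute)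
    also have "\<dots> < R" using dR unfolding \<rho>_def d_def by (simp add: field_simps)
    finally show ?thesis .
  qed
  define k where "k = \<rho> / (d + 2*\<rho>)"
  have k0: "k > 0" unfolding k_def using \<rho>0 d0 d_def by simp
  define \<Phi> where "\<Phi> = (\<lambda>z. y + k *\<^sub>R (y - nn X z))"
  have cont: "continuous_on (cball y \<rho>) \<Phi>"
    unfolding \<Phi>_def by (intro continuous_intros nn_cont[OF P B]) auto
  have maps: "\<Phi> \<in> cball y \<rho> \<rightarrow> cball y \<rho>"
  proof
    fix z assume z: "z \<in> cball y \<rho>"
    note nz = nn_props[OF P B[OF z]]
    have "norm (y - nn X z) \<le> dist y z + dist z (nn X z)" 
      using dist_triangle[of y "nn X z" z] by (simp add: dist_norm)
    also have "\<dots> \<le> \<rho> + (d + \<rho>)" using z nz infdist_triangle[of z X y] by (simp add: d_def dist_commute)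
    finally have "k * norm (y - nn X z) \<le> k * (d + 2*\<rho>)" using k0 by (intro mult_left_mono) auto
    also have "\<dots> = \<rho>" unfolding k_def using \<rho>0 d0 d_def by (simp add: field_simps)
    finally show "\<Phi> z \<in> cball y \<rho>" unfolding \<Phi>_def using k0 by (simp add: dist_norm)
  qed
  obtain z where z: "z \<in> cball y \<rho>" and fz: "\<Phi> z = z" using brouwer_ball[OF \<rho>0 cont maps] by blast
  define q where "q = nn X z"
  note nz = nn_props[OF P B[OF z]]
  have zq: "z - q = (1 + k) *\<^sub>R (y - q)" using fz unfolding \<Phi>_def q_def by (simp add: algebra_simps)
  have zy: "z - y = k *\<^sub>R (y - q)" using fz unfolding \<Phi>_def q_def by (simp add: algebra_simps)
  have Xne: "X \<noteq> {}" using nz by auto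
  have min: "dist z q \<le> dist z q'" if "q' \<in> closure X" for q'
    using nz infdist_le_closure[OF that, of z] unfolding q_def by simp
  have "norm (y - q) \<le> dist y q'" if "q' \<in> closure X" for q'
  proof -
    have "dist z q \<le> dist z y + dist y q'" using min[OF that] dist_triangle[of z q' y] by simp
    moreover have "dist z q = (1+k) * norm (y - q)" using zq k0 by (simp add: dist_norm)
    moreover have "dist z y = k * norm (y - q)" using zy k0 by (simp add: dist_norm)
    ultimately show ?thesis by (simp add: algebra_simps)
  qed
  then have "norm (y - q) \<le> infdist y X" using infdist_geI[OF Xne] by blast
  moreover have "infdist y X \<le> norm (y - q)" using infdist_le_closure[of q X y] nz unfolding q_def by (simp add: dist_norm)
  ultimately have "dist y q = infdist y X" by (simp add: dist_norm)
  then have nny: "nn X y = q" using nn_unique[OF P dR] nz unfolding q_def by blast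
  have "z = nn X y + (1+k) *\<^sub>R (y - nn X y)" using zq nny by (simp add: algebra_simps)
  moreover have "(1+k) * infdist y X \<le> dist z q'" if "q' \<in> closure X" for q'
  proof -
    have "dist z q = (1+k) * norm (y - q)" using zq k0 by (simp add: dist_norm)
    also have "norm (y - q) = infdist y X" using \<open>dist y q = infdist y X\<close> by (simp add: dist_norm)
    finally show ?thesis using min[OF that] by simp
  qed
  ultimately show ?thesis using k0 by (intro exI[of _ "1+k"]) auto
qed

lemma ray_free:
  fixes X :: "'a::euclidean_space set"
  assumes P: "PR X R" and d0: "0 < infdist x X" and dR: "infdist x X < R"
    and t0: "0 \<le> t0" and t0R: "t0 * infdist x X < R"
  shows "\<forall>q\<in>closure X. t0 * infdist x X \<le> dist q (nn X x + t0 *\<^sub>R (x - nn X x))"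
proof (rule ccontr)
  define p where "p = nn X x"
  define e where "e = x - p"
  define d where "d = infdist x X"
  note nx = nn_props[OF P dR]
  have Xne: "X \<noteq> {}" using nx by auto
  have ne: "norm e = d" using nx unfolding e_def p_def d_def by (simp add: dist_norm)
  define A where "A = {t. 0 \<le> t \<and> (\<forall>q\<in>closure X. t*d \<le> dist q (p + t *\<^sub>R e))}"
  assume "\<not> ?thesis"
  then have nt0: "t0 \<notin> A" unfolding A_def p_def e_def d_def using t0 by auto
  have down: "s \<in> A" if "t \<in> A" "0 \<le> s" "s \<le> t" for s t
  proof -
    have "s*d \<le> dist q (p + s *\<^sub>R e)" if q: "q \<in> closure X" for q
    proof -
      have "t*d \<le> dist q (p + t *\<^sub>R e)" using \<open>t \<in> A\<close> q unfolding A_def by auto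
      also have "\<dots> \<le> dist q (p + s *\<^sub>R e) + dist (p + s *\<^sub>R e) (p + t *\<^sub>R e)" by (rule dist_triangle)
      also have "dist (p + s *\<^sub>R e) (p + t *\<^sub>R e) = (t - s) * d"
      proof -
        have "dist (p + s *\<^sub>R e) (p + t *\<^sub>R e) = norm ((s - t) *\<^sub>R e)"
          by (simp add: dist_norm algebra_simps)
        then show ?thesis using ne \<open>s \<le> t\<close> by simp
      qed
      finally show ?thesis by (simp add: algebra_simps)
    qed
    then show ?thesis unfolding A_def using that by auto
  qed
  have lt: "s < t0" if "s \<in> A" for s
    using down[OF that t0] nt0 by force
  have one: "1 \<in> A" unfolding A_def
    using infdist_le_closure[of _ X x] by (auto simp: e_def d_def dist_commute)
  have clA: "closed A"
  proof -
    have "A = {t. 0 \<le> t} \<inter> (\<Inter>q\<in>closure X. {t. t*d \<le> dist q (p + t *\<^sub>R e)})"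
      unfolding A_def by auto
    moreover have "closed {t::real. t*d \<le> dist q (p + t *\<^sub>R e)}" for q
      by (intro closed_Collect_le continuous_intros)
    ultimately show ?thesis by (auto intro!: closed_Int closed_INT closed_Collect_le continuous_intros)
  qed
  have bdd: "bdd_above A" using lt by (auto intro!: bdd_aboveI[of _ t0] less_imp_le)
  define T where "T = Sup A"
  have TA: "T \<in> A" unfolding T_def using closed_contains_Sup[OF _ bdd clA] one by auto
  have T1: "1 \<le> T" unfolding T_def using cSup_upper[OF one bdd] .
  have Tt0: "T < t0" using lt[OF TA] .
  define y where "y = p + T *\<^sub>R e"
  have dpos: "0 < d" using d0 d_def by simp
  have "infdist y X \<le> dist y p" using infdist_le_closure[of p X y] nx p_def by simp
  also have "dist y p = T * d" unfolding y_def using ne T1 by (simp add: dist_norm)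
  finally have le1: "infdist y X \<le> T * d" .
  have "T * d \<le> infdist y X" using TA unfolding A_def y_def
    by (intro infdist_geI[OF Xne]) (auto simp: dist_commute)
  with le1 have dy: "infdist y X = T * d" by simp
  have TdR: "T * d < R"
  proof -
    have "T * d \<le> t0 * d" using Tt0 dpos by simp
    then show ?thesis using t0R d_def by simp
  qed
  have nny: "nn X y = p"
    using nn_unique[of X R y p] P dy TdR nx p_def \<open>dist y p = T * d\<close> by auto
  have ypos: "0 < infdist y X" using dy T1 dpos by simp
  obtain \<kappa> where k1: "\<kappa> > 1" and kk: "\<forall>q'\<in>closure X. \<kappa> * infdist y X \<le> dist (nn X y + \<kappa> *\<^sub>R (y - nn X y)) q'"
    using extend_local[OF P ypos] dy TdR by auto
  have "\<kappa> * T \<in> A" unfolding A_def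
  proof safe
    show "0 \<le> \<kappa> * T" using k1 T1 by simp
    fix q assume "q \<in> closure X"
    then have "\<kappa> * infdist y X \<le> dist (nn X y + \<kappa> *\<^sub>R (y - nn X y)) q" using kk by auto
    then show "\<kappa> * T * d \<le> dist q (p + (\<kappa> * T) *\<^sub>R e)"
      using nny dy by (simp add: y_def dist_commute algebra_simps)
  qed
  then have "\<kappa> * T \<le> T" unfolding T_def using cSup_upper[OF _ bdd] by (simp add: T_def)
  then show False using k1 T1 by simp
qed

lemma key_ineq:
  fixes X :: "'a::euclidean_space set"
  assumes P: "PR X R" and dR: "infdist x X < R" and q: "q \<in> closure X"
    and r0: "0 \<le> r" and rR: "r < R"
  shows "2 * r * inner (q - nn X x) (x - nn X x) \<le> infdist x X * (norm (q - nn X x))^2"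
proof (cases "infdist x X = 0")
  case True
  then have "x = nn X x" using nn_props[OF P dR] by simp
  then show ?thesis using True by simp
next
  case False
  define d where "d = infdist x X"
  define p where "p = nn X x"
  define e where "e = x - p"
  have d0: "0 < d" using False infdist_nonneg[of x X] unfolding d_def by linarith
  have ne: "norm e = d" using nn_props[OF P dR] unfolding e_def p_def d_def by (simp add: dist_norm)
  define t where "t = r / d"
  have td: "t * d = r" unfolding t_def using d0 by simp
  have "t * d \<le> dist q (p + t *\<^sub>R e)"
    using ray_free[OF P _ dR, of t] d0 td rR q r0 unfolding d_def p_def e_def t_def
    by (auto simp: field_simps)
  then have "r\<^sup>2 \<le> (norm ((q - p) - t *\<^sub>R e))\<^sup>2" using td r0
    by (simp add: dist_norm algebra_simps power_mono)
  also have "\<dots> = (norm (q - p))\<^sup>2 - 2 * t * inner (q - p) e + t\<^sup>2 * d\<^sup>2"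
  proof -
    have "(norm ((q - p) - t *\<^sub>R e))\<^sup>2 = inner (q - p) (q - p) - 2 * t * inner (q - p) e + t\<^sup>2 * inner e e"
      unfolding power2_norm_eq_inner by (simp add: inner_diff_left inner_diff_right inner_commute power2_eq_square algebra_simps)
    then show ?thesis using ne by (simp add: power2_norm_eq_inner[symmetric])
  qed
  finally have h: "r\<^sup>2 \<le> (norm (q - p))\<^sup>2 - 2 * t * inner (q - p) e + t\<^sup>2 * d\<^sup>2" .
  have "r\<^sup>2 = t\<^sup>2 * d\<^sup>2" using td by (metis power_mult_distrib)
  with h have "2 * t * inner (q - p) e \<le> (norm (q - p))\<^sup>2" by linarith
  then have "d * (2 * t * inner (q - p) e) \<le> d * (norm (q - p))\<^sup>2" using d0 by simp
  then show ?thesis unfolding d_def[symmetric] p_def[symmetric] e_def[symmetric] td[symmetric]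
    by (simp add: algebra_simps)
qed

lemma nn_lip:
  fixes X :: "'a::euclidean_space set"
  assumes P: "PR X R" and dR: "infdist x X + infdist y X < R"
  shows "norm (nn X x - nn X y) \<le> 2 * norm (x - y)"
proof -
  define p where "p = nn X x"
  define q where "q = nn X y"
  define r where "r = infdist x X + infdist y X"
  have dx: "infdist x X < R" "infdist y X < R" using dR infdist_nonneg[of x X] infdist_nonneg[of y X] by linarith+
  note nx = nn_props[OF P dx(1)] and ny = nn_props[OF P dx(2)]
  have r0: "0 \<le> r" unfolding r_def using infdist_nonneg[of x X] infdist_nonneg[of y X] by linarith
  have K1: "2 * r * inner (q - p) (x - p) \<le> infdist x X * (norm (q - p))^2"
    using key_ineq[OF P dx(1) _ r0] ny dR unfolding p_def q_def r_def by blast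
  have K2: "2 * r * inner (p - q) (y - q) \<le> infdist y X * (norm (p - q))^2"
    using key_ineq[OF P dx(2) _ r0] nx dR unfolding p_def q_def r_def by blast
  show ?thesis
  proof (cases "r = 0")
    case True
    then have "infdist x X = 0" "infdist y X = 0" unfolding r_def using infdist_nonneg[of x X] infdist_nonneg[of y X] by linarith+
    then have "x = p" "y = q" using nx ny unfolding p_def q_def by auto
    then show ?thesis unfolding p_def q_def by simp
  next
    case False
    then have rp: "r > 0" using r0 by simp
    have "norm (p - q) = norm (q - p)" by (simp add: norm_minus_commute)
    with K1 K2 have "2 * r * (inner (q - p) (x - p) + inner (p - q) (y - q)) \<le> r * (norm (q - p))^2"
      unfolding r_def by (simp add: algebra_simps)
    then have "2 * (inner (q - p) (x - p) + inner (p - q) (y - q)) \<le> (norm (q - p))^2" using rp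
      by (metis mult.assoc mult.commute mult_le_cancel_left_pos)
    moreover have "inner (q - p) (x - p) + inner (p - q) (y - q) = inner (q - p) (x - y) + (norm (q - p))^2"
      by (simp add: power2_norm_eq_inner inner_diff_left inner_diff_right algebra_simps inner_commute)
    ultimately have "(norm (q - p))^2 \<le> 2 * inner (q - p) (y - x)"
      by (simp add: inner_diff_right algebra_simps)
    also have "\<dots> \<le> 2 * (norm (q - p) * norm (y - x))" using norm_cauchy_schwarz[of "q - p" "y - x"] by simp
    finally have h: "norm (q - p) * norm (q - p) \<le> norm (q - p) * (2 * norm (x - y))"
      by (simp add: power2_eq_square norm_minus_commute)
    show ?thesis
    proof (cases "norm (q - p) = 0")
      case True then show ?thesis unfolding p_def q_def by (simp add: norm_minus_commute)
    next
      case False then have "norm (q - p) > 0" by simp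
      then have "norm (q - p) \<le> 2 * norm (x - y)" using h by simp
      then show ?thesis unfolding p_def q_def by (simp add: norm_minus_commute)
    qed
  qed
qed

lemma PR_of_reach:
  assumes "ereal R \<le> reach X"
  shows "PR X R"
  unfolding PR_def
proof (intro allI impI)
  fix x assume "infdist x X < R"
  then have "ereal (infdist x X) < reach X" using assms by (metis ereal_less_le less_ereal.simps(1) order_less_le_trans)
  then obtain s where s: "s \<in> {ereal t | t. t \<ge> 0 \<and>
      (\<forall>x. infdist x X < t \<longrightarrow> (\<exists>!y. y \<in> closure X \<and> dist x y = infdist x X))}"
    and "ereal (infdist x X) < s" unfolding reach_def less_Sup_iff by blast
  then show "\<exists>!y. y \<in> closure X \<and> dist x y = infdist x X" by auto
qed

lemma Xtilde_dist:
  assumes "u \<in> Xtilde X" shows "ereal (infdist u X) < reach X / 2"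
proof -
  obtain x y where u: "u = x + y" "x \<in> X" "ereal (norm y) < reach X / 2"
    using assms unfolding Xtilde_def by blast
  have "infdist u X \<le> norm y" using infdist_le[OF u(2), of u] u(1) by (simp add: dist_norm)
  then show ?thesis using u(3) by (meson ereal_less_eq(3) le_less_trans)
qed

lemma gt_aff:
  assumes "linear Pm"
  shows "gt Pm w l \<epsilon> X i ((1 - \<theta>) *\<^sub>R z1 + \<theta> *\<^sub>R z2) a
       = (1 - \<theta>) * gt Pm w l \<epsilon> X i z1 a + \<theta> * gt Pm w l \<epsilon> X i z2 a"
  unfolding gt_def by (simp add: inner_add_left algebra_simps)

lemma gt_shift:
  fixes X :: "'a::euclidean_space set"
  assumes w1: "\<forall>j\<in>{1..l}. norm (w j) \<le> 1" and i: "i \<in> {1..2*l}" and e: "0 \<le> \<epsilon>"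
  shows "\<bar>gt Pm w l \<epsilon> X i z a - gt Pm w l \<epsilon> X i z b\<bar>
         \<le> (1 + \<epsilon>/30) * norm ((a - nn X a) - (b - nn X b))"
proof -
  define D where "D = (a - nn X a) - (b - nn X b)"
  define j where "j = (if i \<le> l then i else i - l)"
  have j: "j \<in> {1..l}" using i unfolding j_def by auto
  have wj: "norm (w j) \<le> 1" using w1 j by blast
  have ip: "\<bar>inner D (w j)\<bar> \<le> norm D"
  proof -
    have "\<bar>inner D (w j)\<bar> \<le> norm D * norm (w j)" by (rule Cauchy_Schwarz_ineq2)
    also have "\<dots> \<le> norm D" using wj by (simp add: mult_left_le)
    finally show ?thesis .
  qed
  have nd: "\<bar>norm (a - nn X a) - norm (b - nn X b)\<bar> \<le> norm D" unfolding D_def by (rule norm_triangle_ineq3)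
  have "gt Pm w l \<epsilon> X i z a - gt Pm w l \<epsilon> X i z b
      = (if i \<le> l then - inner D (w j) else inner D (w j)) - \<epsilon>/30 * (norm (a - nn X a) - norm (b - nn X b))"
    unfolding gt_def D_def j_def by (simp add: inner_diff_left algebra_simps)
  also have "\<bar>\<dots>\<bar> \<le> norm D + \<epsilon>/30 * norm D"
  proof -
    have "\<bar>\<epsilon>/30 * (norm (a - nn X a) - norm (b - nn X b))\<bar> \<le> \<epsilon>/30 * norm D"
      using nd e by (simp add: abs_mult mult_left_mono)
    then show ?thesis using ip by (auto simp: abs_le_iff)
  qed
  finally show ?thesis unfolding D_def by (simp add: algebra_simps)
qed

lemma Ft_closed: "closed (Ft Pm w l \<epsilon> X u)"
proof -
  have "Ft Pm w l \<epsilon> X u = (\<Inter>i\<in>{1..2*l}. {z. gt Pm w l \<epsilon> X i z u \<le> 0})"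
    unfolding Ft_def by auto
  moreover have "closed {z. gt Pm w l \<epsilon> X i z u \<le> 0}" for i
    unfolding gt_def by (cases "i \<le> l") (auto intro!: closed_Collect_le continuous_intros)
  ultimately show ?thesis by auto
qed

lemma beta_min:
  assumes "z0 \<in> Ft Pm w l \<epsilon> X u"
  shows "beta Pm w l \<epsilon> X u \<in> Ft Pm w l \<epsilon> X u \<and> (\<forall>z\<in>Ft Pm w l \<epsilon> X u. norm (beta Pm w l \<epsilon> X u) \<le> norm z)"
proof -
  obtain m where m: "m \<in> Ft Pm w l \<epsilon> X u" "\<And>y. y \<in> Ft Pm w l \<epsilon> X u \<Longrightarrow> dist 0 m \<le> dist 0 y"
    using distance_attains_inf[OF Ft_closed, of Pm w l \<epsilon> X u 0] assms by blast
  show ?thesis unfolding beta_def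
    by (rule arg_minI[of _ m]) (use m in \<open>auto simp: not_less\<close>)
qed

theorem lemma4p5:
  fixes X :: "'a::euclidean_space set"
    and Pm :: "'a \<Rightarrow> 'b::euclidean_space"
    and w :: "nat \<Rightarrow> 'a" and l :: nat
    and \<epsilon> :: real
    and u v :: 'a and zs :: 'b
  assumes reach_pos: "reach X > 0"
    and eps: "0 < \<epsilon>" "\<epsilon> < 1"
    and w_in: "\<forall>i \<in> {1..l}. w i \<in> secants X"
    and w_net: "\<forall>s \<in> secants X. \<exists>i \<in> {1..l}. dist s (w i) < \<epsilon> / 40"
    and Pm_lin: "linear Pm"
    and Pm_dist: "convex_hull_distortion Pm (\<epsilon> / 240) (secants X)"
    and u_in: "u \<in> Xtilde X - closure X"
    and zs_norm: "norm zs \<le> norm (u - nn X u)"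
    and zs_g: "\<forall>i \<in> {1..2*l}. gt Pm w l \<epsilon> X i zs u \<le> - (\<epsilon> / 60) * norm (u - nn X u)"
    and beta_ne: "beta Pm w l \<epsilon> X u \<noteq> 0"
    and v_in: "v \<in> ball u (min 1 (\<epsilon> * norm (u - nn X u) / 480)) \<inter> Xtilde X"
    and v_close: "norm (u - v) \<le> \<epsilon> * norm (beta Pm w l \<epsilon> X u) / 480"
  shows "let \<delta> = 240 * norm (u - v) / (\<epsilon> * norm (u - nn X u));
             zv = (1 - \<delta>) *\<^sub>R beta Pm w l \<epsilon> X u + \<delta> *\<^sub>R zs
         in norm zv \<le> (1 + 4 * \<delta> * norm (u - nn X u) / norm (beta Pm w l \<epsilon> X u))
                        * norm (beta Pm w l \<epsilon> X v)"
proof -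
  define du where "du = norm (u - nn X u)"
  define bu where "bu = beta Pm w l \<epsilon> X u"
  define bv where "bv = beta Pm w l \<epsilon> X v"
  define \<delta> where "\<delta> = 240 * norm (u - v) / (\<epsilon> * du)"
  define F where "F = (\<lambda>a. Ft Pm w l \<epsilon> X a)"
  define g where "g = (\<lambda>i z a. gt Pm w l \<epsilon> X i z a)"
  have uX: "u \<in> Xtilde X" "u \<notin> closure X" using u_in by auto
  have vX: "v \<in> Xtilde X" using v_in by auto
  have hu: "ereal (infdist u X) < reach X / 2" by (rule Xtilde_dist[OF uX(1)])
  have hv: "ereal (infdist v X) < reach X / 2" by (rule Xtilde_dist[OF vX])
  have hsum: "ereal (infdist u X + infdist v X) < reach X"
  proof (cases "reach X")
    case (real r)
    then show ?thesis using hu hv by simp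
  next
    case PInf then show ?thesis by simp
  next
    case MInf then show ?thesis using reach_pos by simp
  qed
  obtain R where R1: "infdist u X + infdist v X < R" and R2: "ereal R < reach X"
    using ereal_dense2[OF hsum] by auto
  have P: "PR X R" using R2 by (intro PR_of_reach) simp
  have duR: "infdist u X < R" and dvR: "infdist v X < R"
    using R1 infdist_nonneg[of u X] infdist_nonneg[of v X] by linarith+
  note nu = nn_props[OF P duR] and nv = nn_props[OF P dvR]
  have du0: "du > 0"
  proof -
    have "u \<noteq> nn X u" using nu uX(2) by auto
    then show ?thesis unfolding du_def by simp
  qed
  have lip: "norm (nn X u - nn X v) \<le> 2 * norm (u - v)" by (rule nn_lip[OF P R1])
  have Dbd: "norm ((u - nn X u) - (v - nn X v)) \<le> 3 * norm (u - v)"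
  proof -
    have "norm ((u - nn X u) - (v - nn X v)) = norm ((u - v) - (nn X u - nn X v))" by (simp add: algebra_simps)
    also have "\<dots> \<le> norm (u - v) + norm (nn X u - nn X v)" by (rule norm_triangle_ineq4)
    finally show ?thesis using lip by simp
  qed
  have w1: "\<forall>j\<in>{1..l}. norm (w j) \<le> 1"
  proof
    fix j assume "j \<in> {1..l}"
    then have wj: "w j \<in> secants X" using w_in by blast
    have "{(1 / norm (x - y)) *\<^sub>R (x - y) | x y. x \<in> X \<and> y \<in> X \<and> x \<noteq> y} \<subseteq> sphere 0 1"
      by auto
    then have "secants X \<subseteq> sphere 0 1" unfolding secants_def by (intro closure_minimal) auto
    then show "norm (w j) \<le> 1" using wj by auto
  qed
  have uvlt: "norm (u - v) < \<epsilon> * du / 480" using v_in unfolding du_def by (simp add: dist_norm)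
  have d0: "0 \<le> \<delta>" unfolding \<delta>_def using du0 eps by simp
  have dhalf: "\<delta> < 1/2"
  proof -
    have "240 * norm (u - v) < (\<epsilon> * du) / 2" using uvlt by simp
    then show ?thesis unfolding \<delta>_def using du0 eps by (simp add: field_simps)
  qed
  have dedu: "\<delta> * (\<epsilon> / 60 * du) = 4 * norm (u - v)"
    unfolding \<delta>_def using du0 eps by (simp add: field_simps)
  define K where "K = (1 + \<epsilon>/30) * (3 * norm (u - v))"
  have K: "K \<le> 4 * norm (u - v)" "0 \<le> K"
  proof -
    have "(1 + \<epsilon>/30) * (3 * norm (u - v)) \<le> (4/3) * (3 * norm (u - v))"
      by (intro mult_right_mono) (use eps in auto)
    then show "K \<le> 4 * norm (u - v)" unfolding K_def by simp
    show "0 \<le> K" unfolding K_def using eps by simp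
  qed
  have shift: "\<bar>g i z a - g i z b\<bar> \<le> K" if "i \<in> {1..2*l}" "(a = u \<and> b = v) \<or> (a = v \<and> b = u)" for i z a b
  proof -
    have "\<bar>g i z a - g i z b\<bar> \<le> (1 + \<epsilon>/30) * norm ((a - nn X a) - (b - nn X b))"
      unfolding g_def by (rule gt_shift[OF w1 that(1)]) (use eps in simp)
    also have "norm ((a - nn X a) - (b - nn X b)) = norm ((u - nn X u) - (v - nn X v))"
      using that(2) by (auto simp: norm_minus_commute)
    also have "(1 + \<epsilon>/30) * \<dots> \<le> K" unfolding K_def using Dbd eps by (intro mult_left_mono) auto
    finally show ?thesis .
  qed
  have zsF: "zs \<in> F u" unfolding F_def Ft_def
  proof (intro CollectI ballI)
    fix i assume i: "i \<in> {1..2*l}"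
    have "gt Pm w l \<epsilon> X i zs u \<le> - (\<epsilon> / 60) * du" using zs_g i unfolding du_def by blast
    also have "\<dots> \<le> 0" using eps du0 by (simp add: mult_nonneg_nonneg)
    finally show "gt Pm w l \<epsilon> X i zs u \<le> 0" .
  qed
  note bmu = beta_min[OF zsF[unfolded F_def]]
  have buF: "bu \<in> F u" and bumin: "\<forall>z\<in>F u. norm bu \<le> norm z" using bmu unfolding bu_def F_def by auto
  have zsg': "\<delta> * g i zs u \<le> - 4 * norm (u - v)" if "i \<in> {1..2*l}" for i
  proof -
    have "g i zs u \<le> - (\<epsilon> / 60) * du" using zs_g that unfolding g_def du_def by blast
    then have "\<delta> * g i zs u \<le> \<delta> * (- (\<epsilon> / 60) * du)" using d0 by (intro mult_left_mono)
    then show ?thesis using dedu by simp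
  qed
  define zA where "zA = (1 - \<delta>) *\<^sub>R bu + \<delta> *\<^sub>R zs"
  have zAF: "zA \<in> F v" unfolding F_def Ft_def
  proof (intro CollectI ballI)
    fix i assume i: "i \<in> {1..2*l}"
    have "g i zA v = (1 - \<delta>) * g i bu v + \<delta> * g i zs v"
      unfolding g_def zA_def by (rule gt_aff[OF Pm_lin])
    also have "\<dots> \<le> (1 - \<delta>) * (g i bu u + K) + \<delta> * (g i zs u + K)"
    proof (intro add_mono mult_left_mono)
      show "g i bu v \<le> g i bu u + K" using shift[OF i, where z=bu and a=v and b=u] by auto
      show "g i zs v \<le> g i zs u + K" using shift[OF i, where z=zs and a=v and b=u] by auto
    qed (use d0 dhalf in auto)
    also have "\<dots> = (1 - \<delta>) * g i bu u + \<delta> * g i zs u + K" by (simp add: algebra_simps)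
    also have "\<dots> \<le> 0 + (- 4 * norm (u - v)) + K"
    proof -
      have "g i bu u \<le> 0" using buF i unfolding F_def Ft_def g_def by auto
      then have "(1 - \<delta>) * g i bu u \<le> 0" using dhalf by (simp add: mult_nonneg_nonpos)
      then show ?thesis using zsg'[OF i] by linarith
    qed
    also have "\<dots> \<le> 0" using K by simp
    finally show "gt Pm w l \<epsilon> X i zA v \<le> 0" unfolding g_def .
  qed
  note bmv = beta_min[OF zAF[unfolded F_def]]
  have bvF: "bv \<in> F v" using bmv unfolding bv_def F_def by auto
  define zB where "zB = (1 - \<delta>) *\<^sub>R bv + \<delta> *\<^sub>R zs"
  have zBF: "zB \<in> F u" unfolding F_def Ft_def
  proof (intro CollectI ballI)
    fix i assume i: "i \<in> {1..2*l}"
    have "g i zB u = (1 - \<delta>) * g i bv u + \<delta> * g i zs u"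
      unfolding g_def zB_def by (rule gt_aff[OF Pm_lin])
    also have "\<dots> \<le> (1 - \<delta>) * (g i bv v + K) + \<delta> * g i zs u"
    proof (intro add_mono mult_left_mono)
      show "g i bv u \<le> g i bv v + K" using shift[OF i, where z=bv and a=u and b=v] by auto
    qed (use d0 dhalf in auto)
    also have "\<dots> \<le> (1 - \<delta>) * (0 + K) + (- 4 * norm (u - v))"
    proof -
      have "g i bv v \<le> 0" using bvF i unfolding F_def Ft_def g_def by auto
      then have "(1 - \<delta>) * (g i bv v + K) \<le> (1 - \<delta>) * (0 + K)" using dhalf by (intro mult_left_mono) auto
      then show ?thesis using zsg'[OF i] by linarith
    qed
    also have "\<dots> \<le> 0"
    proof -
      have "(1 - \<delta>) * K \<le> K" using K d0 by (simp add: algebra_simps mult_nonneg_nonneg)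
      then show ?thesis using K by simp
    qed
    finally show "gt Pm w l \<epsilon> X i zB u \<le> 0" unfolding g_def .
  qed
  have nbu: "norm bu \<le> norm bv + \<delta> * du"
  proof -
    have "norm bu \<le> norm zB" using bumin zBF by blast
    also have "\<dots> \<le> (1 - \<delta>) * norm bv + \<delta> * norm zs" unfolding zB_def
      using d0 dhalf norm_triangle_ineq[of "(1 - \<delta>) *\<^sub>R bv" "\<delta> *\<^sub>R zs"] by simp
    also have "\<dots> \<le> norm bv + \<delta> * du"
    proof -
      have "(1 - \<delta>) * norm bv \<le> norm bv" using d0 by (simp add: algebra_simps mult_nonneg_nonneg)
      moreover have "\<delta> * norm zs \<le> \<delta> * du" using zs_norm d0 unfolding du_def by (intro mult_left_mono)
      ultimately show ?thesis by simp
    qed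
    finally show ?thesis .
  qed
  have nzA: "norm zA \<le> norm bu + \<delta> * du"
  proof -
    have "norm zA \<le> (1 - \<delta>) * norm bu + \<delta> * norm zs" unfolding zA_def
      using d0 dhalf norm_triangle_ineq[of "(1 - \<delta>) *\<^sub>R bu" "\<delta> *\<^sub>R zs"] by simp
    also have "\<dots> \<le> norm bu + \<delta> * du"
    proof -
      have "(1 - \<delta>) * norm bu \<le> norm bu" using d0 by (simp add: algebra_simps mult_nonneg_nonneg)
      moreover have "\<delta> * norm zs \<le> \<delta> * du" using zs_norm d0 unfolding du_def by (intro mult_left_mono)
      ultimately show ?thesis by simp
    qed
    finally show ?thesis .
  qed
  have bu0: "norm bu > 0" using beta_ne unfolding bu_def by simp
  have cle: "\<delta> * du \<le> norm bu / 2"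
  proof -
    have "\<delta> * du = 240 * norm (u - v) / \<epsilon>" unfolding \<delta>_def using du0 eps by (simp add: field_simps)
    also have "\<dots> \<le> 240 * (\<epsilon> * norm bu / 480) / \<epsilon>" using v_close eps unfolding bu_def
      by (intro divide_right_mono mult_left_mono) auto
    also have "\<dots> = norm bu / 2" using eps by (simp add: field_simps)
    finally show ?thesis .
  qed
  have c0: "0 \<le> \<delta> * du" using d0 du0 by simp
  have "2 * (\<delta> * du) * norm bu \<le> 4 * (\<delta> * du) * norm bv"
  proof -
    have "norm bu \<le> 2 * norm bv" using nbu cle by linarith
    then have "(2 * (\<delta> * du)) * norm bu \<le> (2 * (\<delta> * du)) * (2 * norm bv)" using c0 by (intro mult_left_mono) auto
    then show ?thesis by (simp add: algebra_simps)
  qed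
  then have "2 * (\<delta> * du) \<le> 4 * \<delta> * du / norm bu * norm bv" using bu0
    by (simp add: field_simps)
  then have "norm zA \<le> (1 + 4 * \<delta> * du / norm bu) * norm bv"
    using nzA nbu by (simp add: algebra_simps)
  then show ?thesis unfolding Let_def zA_def \<delta>_def du_def bu_def bv_def .
qed

end
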